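(* For $n\ge 3$ and $1\le m\le n-2$, $$a(n,m)=(n-1)\,a(n-1,m-1)+a(n-1,m).$$
   Context: For $k\ge 2$, $A_k$ is the alternating group on $\{1,\dots,k\}$, $T(A_k)=\{(1\,2)(i\,j)\mid 1\le i<j\le k\}$, and for $v\in A_k$, $\ell_{T(A_k)}(v)=\min\{r\ge 0\mid v=t_1\cdots t_r,\ t_i\in T(A_k)\}$. $a(k,m)$ denotes the number of $v\in A_k$ with $\ell_{T(A_k)}(v)=m$. *)

theory Defs
  imports "HOL-Combinatorics.Combinatorics"
begin

definition alt_group :: "nat \<Rightarrow> (nat \<Rightarrow> nat) set" where
  "alt_group k = {p. p permutes {1..k} \<and> evenperm p}"

definition T_alt :: "nat \<Rightarrow> (nat \<Rightarrow> nat) set" where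
  "T_alt k = {transpose 1 2 \<circ> transpose i j | i j. 1 \<le> i \<and> i < j \<and> j \<le> k}"

definition len_T :: "nat \<Rightarrow> (nat \<Rightarrow> nat) \<Rightarrow> nat" where
  "len_T k v = (LEAST r. \<exists>ts. length ts = r \<and> set ts \<subseteq> T_alt k \<and> v = foldr (\<circ>) ts id)"

definition a_count :: "nat \<Rightarrow> nat \<Rightarrow> nat" where
  "a_count k m = card {v \<in> alt_group k. len_T k v = m}"

end

theory Submission
  imports Defs
begin

definition strip :: "nat \<Rightarrow> (nat \<Rightarrow> nat) \<Rightarrow> (nat \<Rightarrow> nat)" where
  "strip n w = w \<circ> transpose (inv w n) n"

fun gS :: "nat \<Rightarrow> (nat \<Rightarrow> nat) \<Rightarrow> nat" where
  "gS n w = (if n \<le> 2 then 0 else gS (n-1) (strip n w) + (if inv w n = n then 0 else 1))"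

fun hS :: "nat \<Rightarrow> (nat \<Rightarrow> nat) \<Rightarrow> nat" where
  "hS n w = (if n \<le> 2 then (if n = 2 \<and> w 1 \<noteq> 1 then 1 else 0)
     else hS (n-1) (strip n w) + (if inv w n = n then 0 else 1))"

declare gS.simps[simp del] hS.simps[simp del]

lemma permutes_fix_remove:
  assumes "p permutes insert a S" "p a = a"
  shows "p permutes S"
proof -
  have 1: "transpose a (p a) = id" using assms(2) by (simp only: transpose_same)
  have 2: "transpose a (p a) \<circ> p permutes S" by (rule permutes_insert_lemma[OF assms(1)])
  show ?thesis using 2 unfolding 1 by (simp only: id_comp)
qed

lemma ins_n: "1 \<le> (n::nat) \<Longrightarrow> {1..n} = insert n {1..n-1}"
  by (cases n) (auto simp: atLeastAtMostSuc_conv)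

lemma inv_in: "w permutes {1..n::nat} \<Longrightarrow> 1 \<le> n \<Longrightarrow> inv w n \<in> {1..n}"
proof -
  assume a: "w permutes {1..n}" "1 \<le> n"
  have i: "inv w permutes {1..n}" using a(1) by (rule permutes_inv)
  have "n \<in> {1..n}" using a(2) by simp
  then show ?thesis by (simp only: permutes_in_image[OF i])
qed

lemma strip_perm:
  assumes "w permutes {1..n::nat}" "1 \<le> n"
  shows "strip n w permutes {1..n-1}"
proof -
  have c: "inv w n \<in> {1..n}" using inv_in assms by blast
  have nn: "n \<in> {1..n}" using assms(2) by simp
  have "strip n w permutes {1..n}" unfolding strip_def
    by (rule permutes_compose[OF permutes_swap_id[OF c nn] assms(1)])
  moreover have "strip n w n = n" unfolding strip_def
    using permutes_inverses(1)[OF assms(1)] by simp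
  ultimately show ?thesis using permutes_fix_remove[of "strip n w" n "{1..n-1}"] ins_n[OF assms(2)] by simp
qed

lemma strip_fix: "w permutes S \<Longrightarrow> w n = n \<Longrightarrow> strip n w = w"
proof -
  assume a: "w permutes S" "w n = n"
  then have "inv w n = n" using permutes_inv_eq[OF a(1)] by blast
  then show ?thesis unfolding strip_def by simp
qed

lemma inv_fix_iff: "w permutes S \<Longrightarrow> (inv w n = n) = (w n = n)"
  using permutes_inv_eq[of w S] by blast

lemma perm12: "w permutes {1..2::nat} \<Longrightarrow> w = id \<or> w = transpose 1 2"
proof -
  assume w: "w permutes {1..2::nat}"
  have s: "{1..2::nat} = {1,2}" by auto
  have o: "\<And>x. x \<noteq> 1 \<Longrightarrow> x \<noteq> 2 \<Longrightarrow> w x = x" using w s permutes_not_in by fastforce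
  have w1: "w 1 \<in> {1,2}" using w s permutes_in_image by fastforce
  have w2: "w 2 \<in> {1,2}" using w s permutes_in_image by fastforce
  have inj: "w 1 \<noteq> w 2" using permutes_inj[OF w] using injD[OF permutes_inj[OF w]] by (metis num.distinct(1) numeral_eq_one_iff)
  show ?thesis
  proof (cases "w 1 = 1")
    case True
    then have "w 2 = 2" using w2 inj by auto
    have "w x = id x" for x
      using True \<open>w 2 = 2\<close> o[of x] by (cases "x = 1"; cases "x = 2") auto
    then have "w = id" by (rule ext)
    then show ?thesis by simp
  next
    case False
    then have "w 1 = 2" "w 2 = 1" using w1 w2 inj by auto
    have "w x = transpose 1 2 x" for x
    proof -
      consider "x = 1" | "x = 2" | "x \<noteq> 1 \<and> x \<noteq> 2" by blast
      then show ?thesis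
      proof cases
        case 1 then show ?thesis using \<open>w 1 = 2\<close> by simp
      next
        case 2 then show ?thesis using \<open>w 2 = 1\<close> by simp
      next
        case 3 then show ?thesis using o[of x] by (simp add: transpose_apply_other)
      qed
    qed
    then have "w = transpose 1 2" by (rule ext)
    then show ?thesis by simp
  qed
qed

lemma hS_rec: "3 \<le> n \<Longrightarrow> hS n w = hS (n-1) (strip n w) + (if inv w n = n then 0 else 1)"
  by (subst hS.simps) simp

lemma gS_rec: "3 \<le> n \<Longrightarrow> gS n w = gS (n-1) (strip n w) + (if inv w n = n then 0 else 1)"
  by (subst gS.simps) simp

lemma hS_2: "hS 2 w = (if w 1 \<noteq> 1 then 1 else 0)"
  by (subst hS.simps) simp

lemma gS_2: "gS 2 w = 0"
  by (subst gS.simps) simp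

lemma id_conj1:
  assumes "a \<noteq> n" "b \<noteq> n"
  shows "transpose a b \<circ> transpose (transpose a b c) n = transpose c n \<circ> transpose a b"
  using assms by (auto simp: fun_eq_iff transpose_def)

lemma id_conj2:
  assumes "a \<noteq> n" "c \<noteq> n" "c \<noteq> a"
  shows "transpose a n \<circ> transpose c n = transpose c n \<circ> transpose a c"
  using assms by (auto simp: fun_eq_iff transpose_def)

lemma inv_comp_n:
  assumes "u permutes S" "t permutes S" "t (t c) = c" "u c = n"
  shows "inv (u \<circ> t) n = t c"
proof -
  have p: "u \<circ> t permutes S" by (rule permutes_compose[OF assms(2) assms(1)])
  have "(u \<circ> t) (t c) = n" using assms(3,4) by simp
  then show ?thesis using permutes_inv_eq[OF p] by blast
qed

lemma hS2_le1: "hS 2 w \<le> 1"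
  by (simp add: hS_2)

lemma Suc_minus_set: "a \<in> {1..Suc n} \<Longrightarrow> a \<noteq> Suc n \<Longrightarrow> a \<in> {1..n}"
  by auto

lemma hstep:
  assumes "2 \<le> n"
  shows "u permutes {1..n} \<Longrightarrow> a \<in> {1..n} \<Longrightarrow> b \<in> {1..n} \<Longrightarrow>
         hS n (u \<circ> transpose a b) \<le> hS n u + 1"
  using assms
proof (induction n arbitrary: u a b rule: nat_induct_at_least)
  case base
  show ?case using hS2_le1[of "u \<circ> transpose a b"] by linarith
next
  case (Suc n)
  define N where "N = Suc n"
  define c where "c = inv u N"
  have N3: "3 \<le> N" using Suc.hyps N_def by simp
  have Nn: "N - 1 = n" using N_def by simp
  have up: "u permutes {1..N}" using Suc.prems N_def by simp
  have hu: "hS N u = hS n (strip N u) + (if c = N then 0 else 1)"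
    using hS_rec[OF N3, of u] Nn c_def by simp
  have su: "strip N u permutes {1..n}" using strip_perm[OF up] Nn N3 by simp
  have uc: "u c = N" using permutes_inverses(1)[OF up] c_def by simp
  have cin: "c \<in> {1..N}" using inv_in[OF up] N3 c_def by simp
  have stu: "strip N u = u \<circ> transpose c N" using strip_def c_def by simp
  have gen: "hS N (u \<circ> transpose a b) \<le> hS N u + 1"
    if ab: "a \<in> {1..N}" "b \<in> {1..N}" for a b
  proof -
    define t where "t = transpose a b"
    have tp: "t permutes {1..N}" using permutes_swap_id[OF ab] t_def by simp
    have tt: "t (t c) = c" using t_def by simp
    have p: "u \<circ> t permutes {1..N}" by (rule permutes_compose[OF tp up])
    have ic: "inv (u \<circ> t) N = t c" by (rule inv_comp_n[OF up tp tt uc])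
    have h2: "hS N (u \<circ> t) = hS n (strip N (u \<circ> t)) + (if t c = N then 0 else 1)"
      using hS_rec[OF N3, of "u \<circ> t"] Nn ic by simp
    have st2: "strip N (u \<circ> t) = u \<circ> t \<circ> transpose (t c) N"
      using strip_def ic by simp
    show ?thesis
    proof (cases "a \<noteq> N \<and> b \<noteq> N")
      case True
      have an: "a \<in> {1..n}" "b \<in> {1..n}" using True ab N_def by auto
      have e1: "strip N (u \<circ> t) = strip N u \<circ> t"
        using st2 stu id_conj1[of a N b c] True t_def by (simp add: comp_assoc)
      have tcN: "(t c = N) = (c = N)"
      proof
        assume "t c = N"
        then have "t (t c) = t N" by simp
        then show "c = N" using tt True t_def by simp
      next
        assume "c = N" then show "t c = N" using True t_def by simp
      qed
      have ih: "hS n (strip N u \<circ> t) \<le> hS n (strip N u) + 1"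
        unfolding t_def by (rule Suc.IH[OF su an])
      show ?thesis using h2 e1 tcN ih hu t_def by simp
    next
      case False
      have key: "hS N (u \<circ> transpose a' N) \<le> hS N u + 1"
        if a': "a' \<in> {1..N}" "a' \<noteq> N" for a'
      proof -
        define t' where "t' = transpose a' N"
        have tp': "t' permutes {1..N}" using permutes_swap_id[OF a'(1)] N3 t'_def by simp
        have tt': "t' (t' c) = c" using t'_def by simp
        have ic': "inv (u \<circ> t') N = t' c" by (rule inv_comp_n[OF up tp' tt' uc])
        have h2': "hS N (u \<circ> t') = hS n (strip N (u \<circ> t')) + (if t' c = N then 0 else 1)"
          using hS_rec[OF N3, of "u \<circ> t'"] Nn ic' by simp
        have st2': "strip N (u \<circ> t') = u \<circ> t' \<circ> transpose (t' c) N"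
          using strip_def ic' by simp
        consider "c = N" | "c = a'" | "c \<noteq> N \<and> c \<noteq> a'" by blast
        then show ?thesis
        proof cases
          case 1
          have "u N = N" using uc 1 by simp
          then have sfix: "strip N u = u" by (rule strip_fix[OF up])
          have "t' c = a'" using 1 t'_def by simp
          then have "strip N (u \<circ> t') = u" using st2' t'_def by (simp add: comp_assoc)
          then show ?thesis using h2' hu sfix 1 \<open>t' c = a'\<close> a'(2) t'_def by simp
        next
          case 2
          have "t' c = N" using 2 t'_def by simp
          then have "strip N (u \<circ> t') = strip N u" using st2' stu 2 t'_def by simp
          then show ?thesis using h2' hu \<open>t' c = N\<close> t'_def by simp
        next
          case 3
          have "t' c = c" using 3 a'(2) t'_def by (simp add: transpose_apply_other)
          then have e3: "strip N (u \<circ> t') = strip N u \<circ> transpose a' c"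
            using st2' stu id_conj2[of a' N c] 3 a'(2) t'_def by (simp add: comp_assoc)
          have in2: "a' \<in> {1..n}" "c \<in> {1..n}" using a' 3 cin N_def by auto
          have ih: "hS n (strip N u \<circ> transpose a' c) \<le> hS n (strip N u) + 1"
            by (rule Suc.IH[OF su in2])
          show ?thesis using h2' e3 ih hu 3 \<open>t' c = c\<close> t'_def by simp
        qed
      qed
      show ?thesis
      proof (cases "b = N")
        case True
        show ?thesis
        proof (cases "a = N")
          case True then show ?thesis using \<open>b = N\<close> by simp
        next
          case False then show ?thesis using key[of a] ab \<open>b = N\<close> by simp
        qed
      next
        case bN: False
        then have "a = N" using False by simp
        then have "transpose a b = transpose b N" by (simp add: transpose_commute)
        then show ?thesis using key[of b] ab bN by simp
      qed
    qed
  qed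
  show ?case using gen Suc.prems unfolding N_def by blast
qed

definition Tr :: "nat \<Rightarrow> (nat \<Rightarrow> nat) set" where
  "Tr n = {transpose i j | i j. i \<in> {1..n} \<and> j \<in> {1..n} \<and> i \<noteq> j}"

lemma Tr_mono: "n \<le> m \<Longrightarrow> Tr n \<subseteq> Tr m"
  unfolding Tr_def by force

lemma foldr_comp_shift: "foldr (\<circ>) ss x = foldr (\<circ>) ss id \<circ> x"
  by (induction ss) (simp_all add: comp_assoc)

lemma foldr_snoc: "foldr (\<circ>) (ss @ [s]) id = foldr (\<circ>) ss id \<circ> s"
  using foldr_comp_shift[of ss s] by simp

lemma Tr_permutes: "s \<in> Tr n \<Longrightarrow> s permutes {1..n}"
proof -
  assume "s \<in> Tr n"
  then obtain i j where "s = transpose i j" "i \<in> {1..n}" "j \<in> {1..n}" unfolding Tr_def by blast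
  then show ?thesis using permutes_swap_id[of i "{1..n}" j] by simp
qed

lemma foldr_Tr_permutes: "set ss \<subseteq> Tr n \<Longrightarrow> foldr (\<circ>) ss id permutes {1..n}"
proof (induction ss)
  case Nil then show ?case using permutes_id[of "{1..n}"] by (simp add: id_def)
next
  case (Cons s ss)
  then have a: "s permutes {1..n}" using Tr_permutes by simp
  have "set ss \<subseteq> Tr n" using Cons.prems by simp
  then have b: "foldr (\<circ>) ss id permutes {1..n}" by (rule Cons.IH)
  have "foldr (\<circ>) (s # ss) id = s \<circ> foldr (\<circ>) ss id" by simp
  then show ?case using permutes_compose[OF b a] by metis
qed

lemma W2:
  assumes "2 \<le> n" "set ss \<subseteq> Tr n"
  shows "hS n (foldr (\<circ>) ss id) \<le> length ss"
  using assms(2)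
proof (induction ss rule: rev_induct)
  case Nil
  have "hS n id = 0"
    using assms(1)
  proof (induction n rule: nat_induct_at_least)
    case base then show ?case by (simp add: hS_2)
  next
    case (Suc n)
    have "strip (Suc n) id = id" using strip_fix[OF permutes_id[of UNIV], of "Suc n"] by simp
    then show ?case using hS_rec[of "Suc n" id] Suc by (simp add: id_def)
  qed
  then show ?case by (simp add: id_def)
next
  case (snoc s ss)
  then have ss: "set ss \<subseteq> Tr n" and s: "s \<in> Tr n" by auto
  obtain a b where ab: "s = transpose a b" "a \<in> {1..n}" "b \<in> {1..n}" using s unfolding Tr_def by blast
  have "hS n (foldr (\<circ>) ss id \<circ> s) \<le> hS n (foldr (\<circ>) ss id) + 1"
    unfolding ab(1) by (rule hstep[OF assms(1) foldr_Tr_permutes[OF ss] ab(2,3)])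
  moreover have "hS n (foldr (\<circ>) ss id) \<le> length ss" by (rule snoc.IH[OF ss])
  moreover have "length (ss @ [s]) = length ss + 1" by simp
  ultimately show ?case unfolding foldr_snoc[of ss s] by linarith
qed

lemma W4:
  assumes "set ss \<subseteq> Tr n"
  shows "evenperm (foldr (\<circ>) ss id) = even (length ss)"
  using assms
proof (induction ss)
  case Nil then show ?case by (simp add: evenperm_id)
next
  case (Cons s ss)
  then have ss: "set ss \<subseteq> Tr n" and s: "s \<in> Tr n" by auto
  obtain a b where ab: "s = transpose a b" "a \<noteq> b" using s unfolding Tr_def by blast
  have ps: "permutation s" using ab permutation_swap_id by simp
  have pf: "permutation (foldr (\<circ>) ss id)"
    using foldr_Tr_permutes[OF ss] permutation_permutes by blast
  have "evenperm (s \<circ> foldr (\<circ>) ss id) = (evenperm s = evenperm (foldr (\<circ>) ss id))"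
    by (rule evenperm_comp[OF ps pf])
  moreover have "\<not> evenperm s" unfolding ab(1) evenperm_swap using ab(2) by simp
  moreover have "evenperm (foldr (\<circ>) ss id) = even (length ss)" by (rule Cons.IH[OF ss])
  moreover have e: "foldr (\<circ>) (s # ss) id = s \<circ> foldr (\<circ>) ss id" by simp
  moreover have L: "even (length (s # ss)) = (\<not> even (length ss))" by simp
  ultimately show ?case by argo
qed

lemma W1:
  assumes "2 \<le> n"
  shows "w permutes {1..n} \<Longrightarrow> \<exists>ss. set ss \<subseteq> Tr n \<and> length ss = hS n w \<and> foldr (\<circ>) ss id = w"
  using assms
proof (induction n arbitrary: w rule: nat_induct_at_least)
  case base
  then consider "w = id" | "w = transpose 1 2" using perm12 by blast
  then show ?case
  proof cases
    case 1 then show ?thesis by (intro exI[of _ "[]"]) (simp add: hS_2)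
  next
    case 2
    have "transpose 1 2 \<in> Tr 2" unfolding Tr_def by force
    then show ?thesis using 2 by (intro exI[of _ "[transpose 1 2]"]) (simp add: hS_2)
  qed
next
  case (Suc n)
  define N where "N = Suc n"
  define c where "c = inv w N"
  have N3: "3 \<le> N" using Suc.hyps N_def by simp
  have up: "w permutes {1..N}" using Suc.prems N_def by simp
  have hu: "hS N w = hS n (strip N w) + (if c = N then 0 else 1)"
    using hS_rec[OF N3, of w] N_def c_def by simp
  have su: "strip N w permutes {1..n}" using strip_perm[OF up] N_def N3 by simp
  have cin: "c \<in> {1..N}" using inv_in[OF up] N3 c_def by simp
  have wst: "w = strip N w \<circ> transpose c N" using strip_def c_def by (simp add: comp_assoc)
  obtain ss where ss: "set ss \<subseteq> Tr n" "length ss = hS n (strip N w)" "foldr (\<circ>) ss id = strip N w"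
    using Suc.IH[OF su] by blast
  have ssN: "set ss \<subseteq> Tr N" using ss(1) Tr_mono[of n N] N_def by auto
  show ?case
  proof (cases "c = N")
    case True
    have l: "length ss = hS N w" using ss(2) hu True by simp
    have "w N = N" using permutes_inverses(1)[OF up, of N] c_def True by simp
    then have sfix: "strip N w = w" by (rule strip_fix[OF up])
    have f: "foldr (\<circ>) ss id = w" using ss(3) sfix by (rule trans)
    show ?thesis using ssN l f unfolding N_def by blast
  next
    case False
    have tN: "transpose c N \<in> Tr N" unfolding Tr_def using cin False N3 by force
    have l: "length (ss @ [transpose c N]) = hS N w" using ss(2) hu False by simp
    have f: "foldr (\<circ>) (ss @ [transpose c N]) id = w"
      unfolding foldr_snoc ss(3) using wst by (rule sym)
    have st: "set (ss @ [transpose c N]) \<subseteq> Tr N" using ssN tN by simp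
    show ?thesis using st l f unfolding N_def by blast
  qed
qed

abbreviation s12 :: "nat \<Rightarrow> nat" where "s12 \<equiv> transpose 1 2"

lemma s12_inv: "s12 \<circ> s12 = id" by simp

lemma s12_canc: "s12 \<circ> (s12 \<circ> f) = f" by (simp add: fun_eq_iff)

lemma s12_perm: "2 \<le> n \<Longrightarrow> s12 permutes {1..n}"
  by (rule permutes_swap_id) auto

lemma conj_tr: "transpose a b \<circ> transpose i j \<circ> transpose a b = transpose (transpose a b i) (transpose a b j)"
  by (auto simp: fun_eq_iff transpose_def)

lemma mem_Tr: "a \<in> {1..n} \<Longrightarrow> b \<in> {1..n} \<Longrightarrow> a \<noteq> b \<Longrightarrow> transpose a b \<in> Tr n"
  unfolding Tr_def by blast

lemma mem_T: "a \<in> {1..n} \<Longrightarrow> b \<in> {1..n} \<Longrightarrow> a \<noteq> b \<Longrightarrow> s12 \<circ> transpose a b \<in> T_alt n"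
proof -
  assume a: "a \<in> {1..n}" "b \<in> {1..n}" "a \<noteq> b"
  show ?thesis
  proof (cases "a < b")
    case True then show ?thesis using a unfolding T_alt_def by force
  next
    case False
    then have "b < a" using a(3) by simp
    moreover have "transpose a b = transpose b a" by (rule transpose_commute)
    ultimately show ?thesis using a unfolding T_alt_def by force
  qed
qed

lemma s12_in: "2 \<le> n \<Longrightarrow> a \<in> {1..n} \<Longrightarrow> s12 a \<in> {1..n}"
  using permutes_in_image[OF s12_perm] by blast

lemma s12_neq: "a \<noteq> b \<Longrightarrow> s12 a \<noteq> s12 b"
  by (metis transpose_involutory)

lemma conv1:
  assumes "2 \<le> n"
  shows "set ts \<subseteq> T_alt n \<Longrightarrow> \<exists>ss. set ss \<subseteq> Tr n \<and> length ss = length ts \<and>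
     foldr (\<circ>) ts id = (if even (length ts) then foldr (\<circ>) ss id else s12 \<circ> foldr (\<circ>) ss id)"
proof (induction ts)
  case Nil then show ?case by (intro exI[of _ "[]"]) simp
next
  case (Cons t ts)
  then have ts: "set ts \<subseteq> T_alt n" and t: "t \<in> T_alt n" by auto
  obtain ss where ss: "set ss \<subseteq> Tr n" "length ss = length ts"
    "foldr (\<circ>) ts id = (if even (length ts) then foldr (\<circ>) ss id else s12 \<circ> foldr (\<circ>) ss id)"
    using Cons.IH[OF ts] by blast
  obtain i j where ij: "t = s12 \<circ> transpose i j" "1 \<le> i" "i < j" "j \<le> n"
    using t unfolding T_alt_def by blast
  have ijn: "i \<in> {1..n}" "j \<in> {1..n}" "i \<noteq> j" using ij by auto
  define P where "P = foldr (\<circ>) ss id"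
  have fc: "foldr (\<circ>) (t # ts) id = t \<circ> foldr (\<circ>) ts id" by simp
  show ?case
  proof (cases "even (length ts)")
    case True
    have e: "foldr (\<circ>) (t # ts) id = s12 \<circ> (transpose i j \<circ> P)"
      using fc ss(3) True ij(1) P_def by (simp only: comp_assoc if_True)
    have fs: "foldr (\<circ>) (transpose i j # ss) id = transpose i j \<circ> P" using P_def by simp
    have st: "set (transpose i j # ss) \<subseteq> Tr n" using ss(1) mem_Tr[OF ijn] by simp
    have l: "length (transpose i j # ss) = length (t # ts)" using ss(2) by simp
    have odd: "\<not> even (length (t # ts))" using True by simp
    have fi: "foldr (\<circ>) (t # ts) id = (if even (length (t # ts)) then foldr (\<circ>) (transpose i j # ss) id
              else s12 \<circ> foldr (\<circ>) (transpose i j # ss) id)"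
      unfolding if_not_P[OF odd] fs by (rule e)
    show ?thesis by (rule exI[of _ "transpose i j # ss"]) (intro conjI st l fi)
  next
    case False
    have e: "foldr (\<circ>) (t # ts) id = (s12 \<circ> transpose i j \<circ> s12) \<circ> P"
      using fc ss(3) False ij(1) P_def by (simp only: comp_assoc if_False)
    then have e2: "foldr (\<circ>) (t # ts) id = transpose (s12 i) (s12 j) \<circ> P"
      by (simp only: conj_tr)
    have m: "transpose (s12 i) (s12 j) \<in> Tr n"
      using mem_Tr[OF s12_in[OF assms ijn(1)] s12_in[OF assms ijn(2)] s12_neq[OF ijn(3)]] .
    have fs: "foldr (\<circ>) (transpose (s12 i) (s12 j) # ss) id = transpose (s12 i) (s12 j) \<circ> P" using P_def by simp
    have st: "set (transpose (s12 i) (s12 j) # ss) \<subseteq> Tr n" using ss(1) m by simp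
    have l: "length (transpose (s12 i) (s12 j) # ss) = length (t # ts)" using ss(2) by simp
    have ev: "even (length (t # ts))" using False by simp
    have fi: "foldr (\<circ>) (t # ts) id = (if even (length (t # ts)) then foldr (\<circ>) (transpose (s12 i) (s12 j) # ss) id
              else s12 \<circ> foldr (\<circ>) (transpose (s12 i) (s12 j) # ss) id)"
      unfolding if_P[OF ev] fs by (rule e2)
    show ?thesis by (rule exI[of _ "transpose (s12 i) (s12 j) # ss"]) (intro conjI st l fi)
  qed
qed

lemma conv2:
  assumes "2 \<le> n"
  shows "set ss \<subseteq> Tr n \<Longrightarrow> \<exists>ts. set ts \<subseteq> T_alt n \<and> length ts = length ss \<and>
     foldr (\<circ>) ts id = (if even (length ss) then foldr (\<circ>) ss id else s12 \<circ> foldr (\<circ>) ss id)"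
proof (induction ss)
  case Nil then show ?case by (intro exI[of _ "[]"]) simp
next
  case (Cons x ss)
  then have ss: "set ss \<subseteq> Tr n" and x: "x \<in> Tr n" by auto
  obtain ts where ts: "set ts \<subseteq> T_alt n" "length ts = length ss"
    "foldr (\<circ>) ts id = (if even (length ss) then foldr (\<circ>) ss id else s12 \<circ> foldr (\<circ>) ss id)"
    using Cons.IH[OF ss] by blast
  obtain a b where ab: "x = transpose a b" "a \<in> {1..n}" "b \<in> {1..n}" "a \<noteq> b"
    using x unfolding Tr_def by blast
  define P where "P = foldr (\<circ>) ss id"
  define Q where "Q = foldr (\<circ>) ts id"
  have fc: "foldr (\<circ>) (x # ss) id = x \<circ> P" using P_def by simp
  show ?case
  proof (cases "even (length ss)")
    case True
    have QP: "Q = P" using ts(3) True P_def Q_def by simp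
    have fs: "foldr (\<circ>) ((s12 \<circ> x) # ts) id = s12 \<circ> (x \<circ> P)"
    proof -
      have "foldr (\<circ>) ((s12 \<circ> x) # ts) id = (s12 \<circ> x) \<circ> Q" using Q_def by simp
      then show ?thesis unfolding QP by (simp only: comp_assoc)
    qed
    have st: "set ((s12 \<circ> x) # ts) \<subseteq> T_alt n" using ts(1) mem_T[OF ab(2,3,4)] ab(1) by simp
    have l: "length ((s12 \<circ> x) # ts) = length (x # ss)" using ts(2) by simp
    have odd: "\<not> even (length (x # ss))" using True by simp
    have fi: "foldr (\<circ>) ((s12 \<circ> x) # ts) id = (if even (length (x # ss)) then foldr (\<circ>) (x # ss) id
              else s12 \<circ> foldr (\<circ>) (x # ss) id)"
      unfolding if_not_P[OF odd] fc by (rule fs)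
    show ?thesis by (rule exI[of _ "(s12 \<circ> x) # ts"]) (intro conjI st l fi)
  next
    case False
    have QP: "Q = s12 \<circ> P" using ts(3) False P_def Q_def by simp
    have "x \<circ> P = x \<circ> (s12 \<circ> s12) \<circ> P" by simp
    also have "\<dots> = s12 \<circ> (s12 \<circ> x \<circ> s12) \<circ> (s12 \<circ> P)" by (simp add: fun_eq_iff)
    also have "\<dots> = s12 \<circ> transpose (s12 a) (s12 b) \<circ> Q" using QP ab(1) by (simp only: conj_tr)
    finally have e: "x \<circ> P = s12 \<circ> transpose (s12 a) (s12 b) \<circ> Q" .
    have m: "s12 \<circ> transpose (s12 a) (s12 b) \<in> T_alt n"
      using mem_T[OF s12_in[OF assms ab(2)] s12_in[OF assms ab(3)] s12_neq[OF ab(4)]] .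
    have fs: "foldr (\<circ>) ((s12 \<circ> transpose (s12 a) (s12 b)) # ts) id = s12 \<circ> transpose (s12 a) (s12 b) \<circ> Q"
      using Q_def by simp
    have st: "set ((s12 \<circ> transpose (s12 a) (s12 b)) # ts) \<subseteq> T_alt n" using ts(1) m by simp
    have l: "length ((s12 \<circ> transpose (s12 a) (s12 b)) # ts) = length (x # ss)" using ts(2) by simp
    have ev: "even (length (x # ss))" using False by simp
    have fi: "foldr (\<circ>) ((s12 \<circ> transpose (s12 a) (s12 b)) # ts) id = (if even (length (x # ss)) then foldr (\<circ>) (x # ss) id
              else s12 \<circ> foldr (\<circ>) (x # ss) id)"
      unfolding if_P[OF ev] fc fs by (rule e[symmetric])
    show ?thesis by (rule exI[of _ "(s12 \<circ> transpose (s12 a) (s12 b)) # ts"]) (intro conjI st l fi)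
  qed
qed

lemma s12_ne_N: "3 \<le> N \<Longrightarrow> s12 N = N"
  by (simp add: transpose_apply_other)

lemma GH:
  assumes "2 \<le> n"
  shows "w permutes {1..n} \<Longrightarrow> gS n (s12 \<circ> w) = gS n w \<and> gS n w \<le> hS n w \<and>
           (hS n w = gS n w \<or> hS n (s12 \<circ> w) = gS n w)"
  using assms
proof (induction n arbitrary: w rule: nat_induct_at_least)
  case base
  have g: "gS 2 (s12 \<circ> w) = gS 2 w" by (simp add: gS_2)
  from perm12[OF base] show ?case
  proof
    assume "w = id"
    then show ?thesis using g by (simp add: hS_2 gS_2)
  next
    assume w: "w = s12"
    have "s12 \<circ> w = id" using w by simp
    then have h: "hS 2 (s12 \<circ> w) = 0" by (simp add: hS_2)
    have g0: "gS 2 w = 0" by (simp add: gS_2)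
    show ?thesis unfolding g g0 by (intro conjI refl le0 disjI2 h)
  qed
next
  case (Suc n)
  define N where "N = Suc n"
  define c where "c = inv w N"
  define k where "k = (if c = N then 0 else 1::nat)"
  have N3: "3 \<le> N" using Suc.hyps N_def by simp
  have Nn: "N - 1 = n" using N_def by simp
  have up: "w permutes {1..N}" using Suc.prems N_def by simp
  have sp: "s12 \<circ> w permutes {1..N}" by (rule permutes_compose[OF up s12_perm]) (use N3 in simp)
  have uc: "w c = N" using permutes_inverses(1)[OF up] c_def by simp
  have "(s12 \<circ> w) c = N" using uc s12_ne_N[OF N3] by simp
  then have ic: "inv (s12 \<circ> w) N = c" using permutes_inv_eq[OF sp] by blast
  have st: "strip N (s12 \<circ> w) = s12 \<circ> strip N w"
    unfolding strip_def ic c_def[symmetric] by (simp only: comp_assoc)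
  have su: "strip N w permutes {1..n}" using strip_perm[OF up] Nn N3 by simp
  define A where "A = strip N w"
  have g1: "gS N (s12 \<circ> w) = gS n (s12 \<circ> A) + k"
    using gS_rec[OF N3, of "s12 \<circ> w"] unfolding st ic Nn A_def k_def .
  have g2: "gS N w = gS n A + k"
    using gS_rec[OF N3, of w] unfolding Nn A_def k_def c_def .
  have h1: "hS N (s12 \<circ> w) = hS n (s12 \<circ> A) + k"
    using hS_rec[OF N3, of "s12 \<circ> w"] unfolding st ic Nn A_def k_def .
  have h2: "hS N w = hS n A + k"
    using hS_rec[OF N3, of w] unfolding Nn A_def k_def c_def .
  have IH: "gS n (s12 \<circ> A) = gS n A \<and> gS n A \<le> hS n A \<and> (hS n A = gS n A \<or> hS n (s12 \<circ> A) = gS n A)"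
    using Suc.IH[OF su] unfolding A_def .
  have "gS N (s12 \<circ> w) = gS N w \<and> gS N w \<le> hS N w \<and> (hS N w = gS N w \<or> hS N (s12 \<circ> w) = gS N w)"
    unfolding g1 g2 h1 h2 using IH by auto
  then show ?case unfolding N_def .
qed

lemma lenT:
  assumes n: "2 \<le> n" and v: "v \<in> alt_group n"
  shows "len_T n v = gS n v"
proof -
  have vp: "v permutes {1..n}" and ev: "evenperm v" using v unfolding alt_group_def by auto
  have sp: "s12 \<circ> v permutes {1..n}" by (rule permutes_compose[OF vp s12_perm[OF n]])
  have GHv: "gS n (s12 \<circ> v) = gS n v \<and> gS n v \<le> hS n v \<and> (hS n v = gS n v \<or> hS n (s12 \<circ> v) = gS n v)"
    by (rule GH[OF n vp])
  have GHs: "gS n (s12 \<circ> (s12 \<circ> v)) = gS n (s12 \<circ> v) \<and> gS n (s12 \<circ> v) \<le> hS n (s12 \<circ> v) \<and> (hS n (s12 \<circ> v) = gS n (s12 \<circ> v) \<or> hS n (s12 \<circ> (s12 \<circ> v)) = gS n (s12 \<circ> v))"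
    by (rule GH[OF n sp])
  have pv: "permutation v" using vp permutation_permutes by blast
  have ps: "permutation s12" by (rule permutation_swap_id)
  have odd_sv: "\<not> evenperm (s12 \<circ> v)"
    using evenperm_comp[OF ps pv] ev evenperm_swap[of "1::nat" 2] by simp
  have canc: "s12 \<circ> (s12 \<circ> v) = v" by (simp add: fun_eq_iff)
  show ?thesis unfolding len_T_def
  proof (rule Least_equality)
    show "\<exists>ts. length ts = gS n v \<and> set ts \<subseteq> T_alt n \<and> v = foldr (\<circ>) ts id"
    proof (cases "hS n v = gS n v")
      case True
      obtain ss where ss: "set ss \<subseteq> Tr n" "length ss = hS n v" "foldr (\<circ>) ss id = v"
        using W1[OF n vp] by blast
      have "even (length ss)" using W4[OF ss(1)] ss(3) ev by simp
      then obtain ts where ts: "set ts \<subseteq> T_alt n" "length ts = length ss" "foldr (\<circ>) ts id = foldr (\<circ>) ss id"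
        using conv2[OF n ss(1)] by auto
      show ?thesis using ts ss True by metis
    next
      case False
      then have hs: "hS n (s12 \<circ> v) = gS n v" using GHv by simp
      obtain ss where ss: "set ss \<subseteq> Tr n" "length ss = hS n (s12 \<circ> v)" "foldr (\<circ>) ss id = s12 \<circ> v"
        using W1[OF n sp] by blast
      have "\<not> even (length ss)" using W4[OF ss(1)] ss(3) odd_sv by simp
      then obtain ts where ts: "set ts \<subseteq> T_alt n" "length ts = length ss" "foldr (\<circ>) ts id = s12 \<circ> foldr (\<circ>) ss id"
        using conv2[OF n ss(1)] by auto
      have "foldr (\<circ>) ts id = v" using ts(3) unfolding ss(3) canc .
      then show ?thesis using ts(1,2) ss(2) hs by metis
    qed
  next
    fix y assume "\<exists>ts. length ts = y \<and> set ts \<subseteq> T_alt n \<and> v = foldr (\<circ>) ts id"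
    then obtain ts where ts: "length ts = y" "set ts \<subseteq> T_alt n" "v = foldr (\<circ>) ts id" by blast
    obtain ss where ss: "set ss \<subseteq> Tr n" "length ss = length ts"
      "foldr (\<circ>) ts id = (if even (length ts) then foldr (\<circ>) ss id else s12 \<circ> foldr (\<circ>) ss id)"
      using conv1[OF n ts(2)] by blast
    show "gS n v \<le> y"
    proof (cases "even (length ts)")
      case True
      then have "v = foldr (\<circ>) ss id" using ts(3) ss(3) by simp
      then have "hS n v \<le> y" using W2[OF n ss(1)] ss(2) ts(1) by simp
      then show ?thesis using GHv by linarith
    next
      case False
      then have "v = s12 \<circ> foldr (\<circ>) ss id" using ts(3) ss(3) by simp
      then have "s12 \<circ> v = foldr (\<circ>) ss id" by (simp add: fun_eq_iff)
      then have "hS n (s12 \<circ> v) \<le> y" using W2[OF n ss(1)] ss(2) ts(1) by simp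
      then show ?thesis using GHv GHs by linarith
    qed
  qed
qed

definition EV :: "nat \<Rightarrow> nat \<Rightarrow> (nat \<Rightarrow> nat) set" where
  "EV k m = {v. v permutes {1..k} \<and> evenperm v \<and> gS k v = m}"

definition OD :: "nat \<Rightarrow> nat \<Rightarrow> (nat \<Rightarrow> nat) set" where
  "OD k m = {v. v permutes {1..k} \<and> \<not> evenperm v \<and> gS k v = m}"

lemma a_EV: "2 \<le> k \<Longrightarrow> a_count k m = card (EV k m)"
proof -
  assume k: "2 \<le> k"
  have "{v \<in> alt_group k. len_T k v = m} = EV k m"
  proof (rule set_eqI)
    fix v
    show "v \<in> {v \<in> alt_group k. len_T k v = m} \<longleftrightarrow> v \<in> EV k m"
    proof
      assume "v \<in> {v \<in> alt_group k. len_T k v = m}"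
      then have a: "v \<in> alt_group k" "len_T k v = m" by auto
      then show "v \<in> EV k m" using lenT[OF k a(1)] unfolding EV_def alt_group_def by simp
    next
      assume "v \<in> EV k m"
      then have a: "v \<in> alt_group k" "gS k v = m" unfolding EV_def alt_group_def by auto
      then show "v \<in> {v \<in> alt_group k. len_T k v = m}" using lenT[OF k a(1)] by simp
    qed
  qed
  then show ?thesis unfolding a_count_def by simp
qed

lemma finite_EV: "finite (EV k m)"
  by (rule finite_subset[OF _ finite_permutations[of "{1..k}"]]) (auto simp: EV_def)

lemma finite_OD: "finite (OD k m)"
  by (rule finite_subset[OF _ finite_permutations[of "{1..k}"]]) (auto simp: OD_def)

lemma OD_EV: "2 \<le> k \<Longrightarrow> card (OD k m) = card (EV k m)"
proof -
  assume k: "2 \<le> k"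
  have ps: "permutation s12" by (rule permutation_swap_id)
  have canc: "\<And>v. s12 \<circ> (s12 \<circ> v) = v" by (simp add: fun_eq_iff)
  have flip: "\<And>v. v permutes {1..k} \<Longrightarrow> s12 \<circ> v permutes {1..k} \<and> evenperm (s12 \<circ> v) = (\<not> evenperm v) \<and> gS k (s12 \<circ> v) = gS k v"
  proof -
    fix v assume vp: "v permutes {1..k}"
    have pv: "permutation v" using vp permutation_permutes by blast
    have "evenperm (s12 \<circ> v) = (evenperm s12 = evenperm v)" by (rule evenperm_comp[OF ps pv])
    moreover have "\<not> evenperm s12" using evenperm_swap[of "1::nat" 2] by simp
    ultimately have e: "evenperm (s12 \<circ> v) = (\<not> evenperm v)" by simp
    have p: "s12 \<circ> v permutes {1..k}" by (rule permutes_compose[OF vp s12_perm[OF k]])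
    have g: "gS k (s12 \<circ> v) = gS k v" using GH[OF k vp] by blast
    show "s12 \<circ> v permutes {1..k} \<and> evenperm (s12 \<circ> v) = (\<not> evenperm v) \<and> gS k (s12 \<circ> v) = gS k v"
      using p e g by blast
  qed
  have "bij_betw (\<lambda>v. s12 \<circ> v) (OD k m) (EV k m)"
  proof (rule bij_betw_byWitness[where f' = "\<lambda>v. s12 \<circ> v"])
    show "\<forall>a\<in>OD k m. s12 \<circ> (s12 \<circ> a) = a" using canc by blast
    show "\<forall>a\<in>EV k m. s12 \<circ> (s12 \<circ> a) = a" using canc by blast
    show "(\<lambda>v. s12 \<circ> v) ` OD k m \<subseteq> EV k m"
    proof
      fix x assume "x \<in> (\<lambda>v. s12 \<circ> v) ` OD k m"
      then obtain v where v: "v \<in> OD k m" "x = s12 \<circ> v" by blast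
      then have "v permutes {1..k}" "\<not> evenperm v" "gS k v = m" unfolding OD_def by auto
      then show "x \<in> EV k m" using flip[of v] v(2) unfolding EV_def by simp
    qed
    show "(\<lambda>v. s12 \<circ> v) ` EV k m \<subseteq> OD k m"
    proof
      fix x assume "x \<in> (\<lambda>v. s12 \<circ> v) ` EV k m"
      then obtain v where v: "v \<in> EV k m" "x = s12 \<circ> v" by blast
      then have "v permutes {1..k}" "evenperm v" "gS k v = m" unfolding EV_def by auto
      then show "x \<in> OD k m" using flip[of v] v(2) unfolding OD_def by simp
    qed
  qed
  then show ?thesis by (rule bij_betw_same_card)
qed


lemma EV_rec:
  assumes n3: "3 \<le> n" and m1: "1 \<le> m"
  shows "card (EV n m) = card (EV (n-1) m) + (n-1) * card (EV (n-1) (m-1))"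
proof -
  define n' where "n' = n - 1"
  have n'2: "2 \<le> n'" using n3 n'_def by simp
  have n1: "1 \<le> n" using n3 by simp
  have nset: "{1..n} = insert n {1..n'}" using ins_n[OF n1] n'_def by simp
  have nnot: "n \<notin> {1..n'}" using n'_def n3 by simp
  define E1 where "E1 = {v \<in> EV n m. v n = n}"
  define E2 where "E2 = {v \<in> EV n m. v n \<noteq> n}"
  have split: "EV n m = E1 \<union> E2" unfolding E1_def E2_def by blast
  have disj: "E1 \<inter> E2 = {}" unfolding E1_def E2_def by blast
  have fin1: "finite E1" using finite_EV[of n m] unfolding E1_def by simp
  have fin2: "finite E2" using finite_EV[of n m] unfolding E2_def by simp
  have E1eq: "E1 = EV n' m"
  proof (rule set_eqI)
    fix v
    show "v \<in> E1 \<longleftrightarrow> v \<in> EV n' m"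
    proof
      assume "v \<in> E1"
      then have a: "v permutes {1..n}" "evenperm v" "gS n v = m" "v n = n" unfolding E1_def EV_def by auto
      have vp: "v permutes {1..n'}" using permutes_fix_remove[of v n "{1..n'}"] a(1,4) nset by simp
      have sf: "strip n v = v" by (rule strip_fix[OF a(1) a(4)])
      have iv: "inv v n = n" using inv_fix_iff[OF a(1)] a(4) by simp
      have "gS n v = gS n' v" using gS_rec[OF n3, of v] sf iv n'_def by simp
      then show "v \<in> EV n' m" using vp a unfolding EV_def by simp
    next
      assume "v \<in> EV n' m"
      then have a: "v permutes {1..n'}" "evenperm v" "gS n' v = m" unfolding EV_def by auto
      have vp: "v permutes {1..n}" using permutes_subset[OF a(1)] nset by blast
      have vn: "v n = n" using permutes_not_in[OF a(1) nnot] .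
      have sf: "strip n v = v" by (rule strip_fix[OF vp vn])
      have iv: "inv v n = n" using inv_fix_iff[OF vp] vn by simp
      have "gS n v = gS n' v" using gS_rec[OF n3, of v] sf iv n'_def by simp
      then show "v \<in> E1" using vp a vn unfolding E1_def EV_def by simp
    qed
  qed
  define f where "f = (\<lambda>v. (strip n v, inv v n))"
  define g :: "(nat \<Rightarrow> nat) \<times> nat \<Rightarrow> nat \<Rightarrow> nat" where "g = (\<lambda>(w, c). w \<circ> transpose c n)"
  have bij: "bij_betw f E2 (OD n' (m-1) \<times> {1..n'})"
  proof (rule bij_betw_byWitness[of E2 g f "OD n' (m-1) \<times> {1..n'}"])
    show "\<forall>v\<in>E2. g (f v) = v"
    proof
      fix v assume "v \<in> E2"
      show "g (f v) = v" unfolding f_def g_def strip_def by (simp add: fun_eq_iff)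
    qed
    show "\<forall>a\<in>OD n' (m-1) \<times> {1..n'}. f (g a) = a"
    proof
      fix a assume "a \<in> OD n' (m-1) \<times> {1..n'}"
      then obtain w c where a: "a = (w, c)" "w permutes {1..n'}" "c \<in> {1..n'}" unfolding OD_def by auto
      have wp: "w permutes {1..n}" using permutes_subset[OF a(2)] nset by blast
      have wn: "w n = n" using permutes_not_in[OF a(2) nnot] .
      have cn: "c \<in> {1..n}" using a(3) nset by simp
      have tp: "transpose c n permutes {1..n}" using permutes_swap_id[OF cn] n1 by simp
      have vp: "w \<circ> transpose c n permutes {1..n}" by (rule permutes_compose[OF tp wp])
      have "(w \<circ> transpose c n) c = n" using wn by simp
      then have iv: "inv (w \<circ> transpose c n) n = c" using permutes_inv_eq[OF vp] by blast
      have "strip n (w \<circ> transpose c n) = w" unfolding strip_def iv by (simp add: fun_eq_iff)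
      then show "f (g a) = a" unfolding f_def g_def a(1) using iv by simp
    qed
    show "f ` E2 \<subseteq> OD n' (m-1) \<times> {1..n'}"
    proof
      fix x assume "x \<in> f ` E2"
      then obtain v where v: "v \<in> E2" "x = f v" by blast
      then have a: "v permutes {1..n}" "evenperm v" "gS n v = m" "v n \<noteq> n" unfolding E2_def EV_def by auto
      define c where "c = inv v n"
      have cin: "c \<in> {1..n}" using inv_in[OF a(1) n1] c_def by simp
      have cn: "c \<noteq> n" using inv_fix_iff[OF a(1)] a(4) c_def by simp
      have c': "c \<in> {1..n'}" using cin cn n'_def by auto
      have sp: "strip n v permutes {1..n'}" using strip_perm[OF a(1) n1] n'_def by simp
      have g1: "gS n v = gS n' (strip n v) + 1" using gS_rec[OF n3, of v] cn c_def n'_def by simp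
      have pv: "permutation v" using a(1) permutation_permutes by blast
      have pt: "permutation (transpose c n)" by (rule permutation_swap_id)
      have "evenperm (v \<circ> transpose c n) = (evenperm v = evenperm (transpose c n))"
        by (rule evenperm_comp[OF pv pt])
      then have "\<not> evenperm (strip n v)" unfolding strip_def c_def[symmetric]
        using a(2) cn evenperm_swap[of c n] by simp
      then have "strip n v \<in> OD n' (m-1)" using sp g1 a(3) unfolding OD_def by simp
      then show "x \<in> OD n' (m-1) \<times> {1..n'}" using v(2) c' c_def unfolding f_def by simp
    qed
    show "g ` (OD n' (m-1) \<times> {1..n'}) \<subseteq> E2"
    proof
      fix x assume "x \<in> g ` (OD n' (m-1) \<times> {1..n'})"
      then obtain w c where a: "x = w \<circ> transpose c n" "w permutes {1..n'}" "c \<in> {1..n'}"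
        "\<not> evenperm w" "gS n' w = m - 1" unfolding OD_def g_def by auto
      have wp: "w permutes {1..n}" using permutes_subset[OF a(2)] nset by blast
      have wn: "w n = n" using permutes_not_in[OF a(2) nnot] .
      have cn: "c \<in> {1..n}" using a(3) nset by simp
      have cneq: "c \<noteq> n" using a(3) nnot by auto
      have tp: "transpose c n permutes {1..n}" using permutes_swap_id[OF cn] n1 by simp
      have vp: "w \<circ> transpose c n permutes {1..n}" by (rule permutes_compose[OF tp wp])
      have "(w \<circ> transpose c n) c = n" using wn by simp
      then have iv: "inv (w \<circ> transpose c n) n = c" using permutes_inv_eq[OF vp] by blast
      have st: "strip n (w \<circ> transpose c n) = w" unfolding strip_def iv by (simp add: fun_eq_iff)
      have "gS n (w \<circ> transpose c n) = gS n' w + 1"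
        using gS_rec[OF n3, of "w \<circ> transpose c n"] unfolding st iv using cneq n'_def by simp
      then have gm: "gS n (w \<circ> transpose c n) = m" using a(5) m1 by simp
      have pw: "permutation w" using wp permutation_permutes by blast
      have pt: "permutation (transpose c n)" by (rule permutation_swap_id)
      have "evenperm (w \<circ> transpose c n) = (evenperm w = evenperm (transpose c n))"
        by (rule evenperm_comp[OF pw pt])
      then have ev: "evenperm (w \<circ> transpose c n)" using a(4) cneq evenperm_swap[of c n] by simp
      have "w c \<in> {1..n'}" using permutes_in_image[OF a(2)] a(3) by simp
      then have "(w \<circ> transpose c n) n \<noteq> n" using nnot by auto
      then show "x \<in> E2" using a(1) vp ev gm unfolding E2_def EV_def by simp
    qed
  qed
  have c2: "card E2 = card (OD n' (m-1)) * n'"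
    using bij_betw_same_card[OF bij] card_cartesian_product[of "OD n' (m-1)" "{1..n'}"] by simp
  have "card (EV n m) = card E1 + card E2" unfolding split by (rule card_Un_disjoint[OF fin1 fin2 disj])
  then show ?thesis using E1eq c2 OD_EV[OF n'2] n'_def by simp
qed

theorem corollary5p4:
  fixes n m :: nat
  assumes "n \<ge> 3" and "1 \<le> m" and "m \<le> n - 2"
  shows "a_count n m = (n - 1) * a_count (n - 1) (m - 1) + a_count (n - 1) m"
proof -
  have n2: "2 \<le> n" "2 \<le> n - 1" using assms(1) by auto
  have "a_count n m = card (EV n m)" by (rule a_EV[OF n2(1)])
  also have "\<dots> = card (EV (n-1) m) + (n-1) * card (EV (n-1) (m-1))"
    by (rule EV_rec[OF assms(1) assms(2)])
  also have "\<dots> = a_count (n-1) m + (n-1) * a_count (n-1) (m-1)"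
    using a_EV[OF n2(2), of m] a_EV[OF n2(2), of "m-1"] by simp
  finally show ?thesis by simp
qed

end
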